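(* Let $l\in\{1,\dots,n-1\}$. For $I\subseteq[1,n-1]$ set $\alpha(I)=c_{I\cap[1,l-1]}\,c_{[l,n-1]\setminus(I\cap[l,n-1])}\,\sigma_{[l,n]}\,a_l$. Then $\ell(t\alpha(I))>\ell(\alpha(I))$ if and only if $[1,l-1]\subsetneq I$.
   Context: $W_n$ is the Weyl group of type $B_n$ with Coxeter generators $t,s_1,\dots,s_{n-1}$ ($(ts_1)^4=1$, $(s_is_{i+1})^3=1$, other distinct pairs commute), $\ell$ its length function. $[i,j]=\{i,i+1,\dots,j\}$ (empty if $j<i$). Set $r_1=t$, $r_{i+1}=s_ir_i$, $a_l=r_1\cdots r_l$. For $1\le i\le j\le n$, $\sigma_{[i,j]}$ is the longest element of the subgroup generated by $s_i,\dots,s_{j-1}$. For $J=\{j_1<\dots<j_k\}\subseteq[1,n-1]$, $c_J=s_{j_1}s_{j_2}\cdots s_{j_k}$ ($c_\varnothing=1$). *)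

theory Defs
  imports Main
begin

text \<open>Concrete model of the Weyl group W_n of type B_n: signed permutations of
  {-n..-1,1..n}, realised as maps int => int, with group product = composition
  (x * y = x o y).  These satisfy exactly the
  Coxeter relations of type B_n, and the resulting group is the Coxeter group W_n.\<close>

definition tB :: "int \<Rightarrow> int" where
  "tB x = (if x = 1 then -1 else if x = -1 then 1 else x)"

definition sB :: "nat \<Rightarrow> int \<Rightarrow> int" where
  "sB i x = (if x = int i then int i + 1 else if x = int i + 1 then int i
             else if x = - int i then - int i - 1 else if x = - int i - 1 then - int i
             else x)"

definition gen :: "nat \<Rightarrow> int \<Rightarrow> int" where
  "gen k = (if k = 0 then tB else sB k)"

definition evalw :: "nat list \<Rightarrow> int \<Rightarrow> int" where
  "evalw ws = foldr (\<lambda>k f. gen k \<circ> f) ws id"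

definition WB :: "nat \<Rightarrow> (int \<Rightarrow> int) set" where
  "WB n = {evalw ws | ws. set ws \<subseteq> {0..<n}}"

definition lenB :: "nat \<Rightarrow> (int \<Rightarrow> int) \<Rightarrow> nat" where
  "lenB n w = (LEAST k. \<exists>ws. length ws = k \<and> set ws \<subseteq> {0..<n} \<and> evalw ws = w)"

fun rB :: "nat \<Rightarrow> int \<Rightarrow> int" where
  "rB 0 = id"
| "rB (Suc 0) = tB"
| "rB (Suc (Suc i)) = sB (Suc i) \<circ> rB (Suc i)"

fun aB :: "nat \<Rightarrow> int \<Rightarrow> int" where
  "aB 0 = id"
| "aB (Suc l) = aB l \<circ> rB (Suc l)"

definition parB :: "nat \<Rightarrow> nat \<Rightarrow> (int \<Rightarrow> int) set" where
  "parB i j = {evalw ws | ws. set ws \<subseteq> {i..<j}}"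

definition sigmaB :: "nat \<Rightarrow> nat \<Rightarrow> nat \<Rightarrow> int \<Rightarrow> int" where
  "sigmaB n i j = (SOME w. w \<in> parB i j \<and> (\<forall>v \<in> parB i j. lenB n v \<le> lenB n w))"

definition cB :: "nat set \<Rightarrow> int \<Rightarrow> int" where
  "cB J = evalw (sorted_list_of_set J)"

definition alphaB :: "nat \<Rightarrow> nat \<Rightarrow> nat set \<Rightarrow> int \<Rightarrow> int" where
  "alphaB n l I = cB (I \<inter> {1..l-1}) \<circ> cB ({l..n-1} - (I \<inter> {l..n-1}))
                  \<circ> sigmaB n l n \<circ> aB l"

end

theory Submission
  imports Defs
begin


lemma evalw_Nil[simp]: "evalw [] = id" by (simp add: evalw_def)
lemma evalw_Cons[simp]: "evalw (k#ws) = gen k \<circ> evalw ws" by (simp add: evalw_def)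
lemma evalw_append: "evalw (xs @ ys) = evalw xs \<circ> evalw ys"
  by (induction xs) (auto simp: comp_assoc)

lemma gen_invol[simp]: "gen k (gen k x) = x"
  by (auto simp: gen_def tB_def sB_def)

lemma evalw_rev: "evalw (rev us) \<circ> evalw us = id"
proof (induction us)
  case Nil then show ?case by simp
next
  case (Cons k us)
  have "evalw (rev (k#us)) \<circ> evalw (k#us) = evalw (rev us) \<circ> (gen k \<circ> gen k) \<circ> evalw us"
    by (simp add: evalw_append comp_assoc)
  also have "gen k \<circ> gen k = id" by (rule ext) simp
  finally show ?case using Cons by simp
qed

definition Dn :: "nat \<Rightarrow> int set" where "Dn n = {x. x \<noteq> 0 \<and> \<bar>x\<bar> \<le> int n}"
definition Rt :: "nat \<Rightarrow> int set set" where
  "Rt n = {S. (\<exists>u\<in>Dn n. S = {u}) \<or> (\<exists>u\<in>Dn n. \<exists>v\<in>Dn n. \<bar>u\<bar> \<noteq> \<bar>v\<bar> \<and> S = {u,v})}"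
definition posr :: "int set \<Rightarrow> bool" where
  "posr S = (\<exists>u\<in>S. u > 0 \<and> (\<forall>v\<in>S. \<bar>v\<bar> \<le> \<bar>u\<bar>))"
definition Nset :: "nat \<Rightarrow> (int \<Rightarrow> int) \<Rightarrow> int set set" where
  "Nset n w = {S \<in> Rt n. posr S \<and> \<not> posr (w ` S)}"
definition Lf :: "nat \<Rightarrow> (int \<Rightarrow> int) \<Rightarrow> nat" where "Lf n w = card (Nset n w)"
definition sp :: "nat \<Rightarrow> (int \<Rightarrow> int) \<Rightarrow> bool" where
  "sp n w = ((\<forall>x. w (-x) = - w x) \<and> (\<forall>x. x \<notin> Dn n \<longrightarrow> w x = x) \<and> bij w)"
definition alr :: "nat \<Rightarrow> int set" where
  "alr k = (if k = 0 then {1} else {int k + 1, - int k})"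

lemma posr_single[simp]: "posr {u} \<longleftrightarrow> u > 0" by (auto simp: posr_def)
lemma posr_pair: "\<bar>a\<bar> \<noteq> \<bar>b\<bar> \<Longrightarrow> posr {a,b} \<longleftrightarrow> (if \<bar>a\<bar> < \<bar>b\<bar> then b > 0 else a > 0)"
  by (auto simp: posr_def)

lemma finite_Dn: "finite (Dn n)"
  by (rule finite_subset[of _ "{-int n..int n}"]) (auto simp: Dn_def)
lemma finite_Rt: "finite (Rt n)"
  by (rule finite_subset[of _ "Pow (Dn n)"]) (auto simp: Rt_def finite_Dn)
lemma finite_Nset: "finite (Nset n w)"
  by (rule finite_subset[OF _ finite_Rt]) (auto simp: Nset_def)
lemma Lf_bound: "Lf n w \<le> card (Rt n)"
  unfolding Lf_def by (rule card_mono[OF finite_Rt]) (auto simp: Nset_def)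

lemma sp_id: "sp n id" by (simp add: sp_def)
lemma sp_comp: "sp n f \<Longrightarrow> sp n g \<Longrightarrow> sp n (f \<circ> g)"
  by (auto simp: sp_def bij_comp)

lemma sp_gen: "k < n \<Longrightarrow> sp n (gen k)"
proof -
  assume k: "k < n"
  have "bij (gen k)" by (rule o_bij[of "gen k"]) (auto simp: fun_eq_iff)
  moreover have "\<forall>x. gen k (-x) = - gen k x" by (auto simp: gen_def tB_def sB_def)
  moreover have "\<forall>x. x \<notin> Dn n \<longrightarrow> gen k x = x" using k
    by (auto simp: gen_def tB_def sB_def Dn_def)
  ultimately show ?thesis by (simp add: sp_def)
qed

lemma sp_evalw: "set ws \<subseteq> {0..<n} \<Longrightarrow> sp n (evalw ws)"
  by (induction ws) (auto simp: sp_id sp_comp sp_gen)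

lemma sp_odd: "sp n w \<Longrightarrow> w (-x) = - w x" by (simp add: sp_def)
lemma sp_inj: "sp n w \<Longrightarrow> w x = w y \<longleftrightarrow> x = y"
  by (auto simp: sp_def bij_def inj_eq)
lemma sp_out: "sp n w \<Longrightarrow> x \<notin> Dn n \<Longrightarrow> w x = x" by (simp add: sp_def)
lemma sp_D: assumes "sp n w" "x \<in> Dn n" shows "w x \<in> Dn n"
proof (rule ccontr)
  assume "w x \<notin> Dn n"
  then have "w (w x) = w x" using sp_out[OF assms(1)] by blast
  then have "w x = x" using sp_inj[OF assms(1)] by blast
  with \<open>w x \<notin> Dn n\<close> assms(2) show False by simp
qed
lemma abs_eq_int: "\<bar>a::int\<bar> = \<bar>b\<bar> \<longleftrightarrow> a = b \<or> a = -b" by arith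
lemma sp_abs: assumes "sp n w" shows "\<bar>w u\<bar> = \<bar>w v\<bar> \<longleftrightarrow> \<bar>u\<bar> = \<bar>v\<bar>"
proof -
  have "\<bar>w u\<bar> = \<bar>w v\<bar> \<longleftrightarrow> w u = w v \<or> w u = w (-v)"
    using sp_odd[OF assms] by (auto simp: abs_eq_int)
  also have "\<dots> \<longleftrightarrow> u = v \<or> u = -v" using sp_inj[OF assms] by blast
  finally show ?thesis by (auto simp: abs_eq_int)
qed

lemma sp_Rt: assumes "sp n w" "S \<in> Rt n" shows "w ` S \<in> Rt n"
proof -
  from assms(2) consider (a) u where "u \<in> Dn n" "S = {u}"
    | (b) u v where "u \<in> Dn n" "v \<in> Dn n" "\<bar>u\<bar> \<noteq> \<bar>v\<bar>" "S = {u,v}"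
    unfolding Rt_def by blast
  then show ?thesis
  proof cases
    case a then show ?thesis using sp_D[OF assms(1)] unfolding Rt_def by auto
  next
    case b
    then have "w u \<in> Dn n" "w v \<in> Dn n" "\<bar>w u\<bar> \<noteq> \<bar>w v\<bar>"
      using sp_D[OF assms(1)] sp_abs[OF assms(1)] by auto
    then show ?thesis using b unfolding Rt_def by blast
  qed
qed

lemma Dn_nz: "u \<in> Dn n \<Longrightarrow> u \<noteq> 0" by (simp add: Dn_def)

lemma Rt_neg: assumes "S \<in> Rt n" shows "posr (uminus ` S) \<longleftrightarrow> \<not> posr S"
proof -
  from assms consider (a) u where "u \<in> Dn n" "S = {u}"
    | (b) u v where "u \<in> Dn n" "v \<in> Dn n" "\<bar>u\<bar> \<noteq> \<bar>v\<bar>" "S = {u,v}"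
    unfolding Rt_def by blast
  then show ?thesis
  proof cases
    case a then show ?thesis using Dn_nz[of u n] by auto
  next
    case b then show ?thesis using Dn_nz[of u n] Dn_nz[of v n] by (auto simp: posr_pair)
  qed
qed

lemma img_neg: "sp n w \<Longrightarrow> w ` (uminus ` S) = uminus ` (w ` S)"
  by (auto simp: image_image sp_odd)

lemma gen_alr: "gen k ` alr k = uminus ` alr k"
  by (auto simp: gen_def alr_def tB_def sB_def)

lemma alr_Rt: assumes "k < n" shows "alr k \<in> Rt n \<and> posr (alr k)"
proof (cases "k = 0")
  case True then show ?thesis using assms by (auto simp: alr_def Rt_def Dn_def)
next
  case False
  have "int k + 1 \<in> Dn n" "- int k \<in> Dn n" "\<bar>int k + 1\<bar> \<noteq> \<bar>- int k\<bar>" using assms False by (auto simp: Dn_def)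
  then have "{int k + 1, - int k} \<in> Rt n" unfolding Rt_def by blast
  then have "alr k \<in> Rt n" using False by (simp add: alr_def)
  then show ?thesis using False by (simp add: alr_def posr_pair)
qed

lemma sB_abs: "\<bar>sB k x\<bar> = (if \<bar>x\<bar> = int k then int k + 1 else if \<bar>x\<bar> = int k + 1 then int k else \<bar>x\<bar>)"
  unfolding sB_def by auto
lemma sB_sgn: "k \<ge> 1 \<Longrightarrow> sB k x > 0 \<longleftrightarrow> x > 0"
  unfolding sB_def by auto
lemma sB_pos: fixes u v :: int
  assumes "\<bar>u\<bar> \<noteq> \<bar>v\<bar>" "u \<noteq> 0" "v \<noteq> 0" "k \<ge> 1"
    "if \<bar>u\<bar> < \<bar>v\<bar> then v > 0 else u > 0" "\<not> (u = int k + 1 \<and> v = - int k \<or> u = - int k \<and> v = int k + 1)"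
  shows "\<bar>sB k u\<bar> \<noteq> \<bar>sB k v\<bar> \<and> (if \<bar>sB k u\<bar> < \<bar>sB k v\<bar> then sB k v > 0 else sB k u > 0)"
  using assms unfolding sB_abs sB_sgn[OF assms(4)] by (auto split: if_splits)

lemma tB_pos: fixes u v :: int
  assumes "\<bar>u\<bar> \<noteq> \<bar>v\<bar>" "u \<noteq> 0" "v \<noteq> 0"
    "if \<bar>u\<bar> < \<bar>v\<bar> then v > 0 else u > 0"
  shows "\<bar>tB u\<bar> \<noteq> \<bar>tB v\<bar> \<and> (if \<bar>tB u\<bar> < \<bar>tB v\<bar> then tB v > 0 else tB u > 0)"
  using assms unfolding tB_def by (auto split: if_splits)

lemma gen_pos: assumes "k < n" "S \<in> Rt n" "posr S" "S \<noteq> alr k"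
  shows "posr (gen k ` S)"
proof -
  from assms(2) consider (a) u where "u \<in> Dn n" "S = {u}"
    | (b) u v where "u \<in> Dn n" "v \<in> Dn n" "\<bar>u\<bar> \<noteq> \<bar>v\<bar>" "S = {u,v}"
    unfolding Rt_def by blast
  then show ?thesis
  proof cases
    case a then show ?thesis using assms
      by (cases "k = 0") (auto simp: gen_def tB_def alr_def sB_sgn)
  next
    case b
    have nz: "u \<noteq> 0" "v \<noteq> 0" using b Dn_nz by auto
    have p: "if \<bar>u\<bar> < \<bar>v\<bar> then v > 0 else u > 0" using assms(3) b posr_pair by metis
    show ?thesis
    proof (cases "k = 0")
      case True
      then show ?thesis using tB_pos[OF b(3) nz p] b by (simp add: gen_def posr_pair)
    next
      case False
      have "\<not> (u = int k + 1 \<and> v = - int k \<or> u = - int k \<and> v = int k + 1)"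
        using assms(4) b False by (auto simp: alr_def)
      from sB_pos[OF b(3) nz _ p this] False
      show ?thesis using b by (simp add: gen_def posr_pair)
    qed
  qed
qed

lemma gen_ne: assumes "k < n" "posr S" shows "gen k ` S \<noteq> alr k"
proof
  assume "gen k ` S = alr k"
  moreover have "S = gen k ` (gen k ` S)" by (simp add: image_image)
  ultimately have "S = gen k ` alr k" by simp
  then have "S = uminus ` alr k" by (simp add: gen_alr)
  with assms alr_Rt[OF assms(1)] Rt_neg show False by blast
qed

lemma gen_Rt: "k < n \<Longrightarrow> S \<in> Rt n \<Longrightarrow> gen k ` S \<in> Rt n"
  using sp_Rt sp_gen by blast

lemma N_step: assumes w: "sp n w" and k: "k < n"
  shows "(posr (w ` alr k) \<longrightarrow> Lf n (w \<circ> gen k) = Lf n w + 1) \<and>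
         (\<not> posr (w ` alr k) \<longrightarrow> Lf n w = Lf n (w \<circ> gen k) + 1)"
proof -
  let ?a = "alr k" and ?g = "gen k"
  have aR: "?a \<in> Rt n" "posr ?a" using alr_Rt[OF k] by auto
  have eq: "Nset n (w \<circ> ?g) - {?a} = (\<lambda>S. ?g ` S) ` (Nset n w - {?a})"
  proof
    show "Nset n (w \<circ> ?g) - {?a} \<subseteq> (\<lambda>S. ?g ` S) ` (Nset n w - {?a})"
    proof
      fix S assume S: "S \<in> Nset n (w \<circ> ?g) - {?a}"
      then have S1: "S \<in> Rt n" "posr S" "S \<noteq> ?a" "\<not> posr (w ` (?g ` S))"
        by (auto simp: Nset_def image_comp)
      have "?g ` S \<in> Nset n w - {?a}"
        using S1 gen_pos[OF k] gen_ne[OF k] gen_Rt[OF k] by (auto simp: Nset_def)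
      moreover have "S = ?g ` (?g ` S)" by (auto simp: image_image)
      ultimately show "S \<in> (\<lambda>S. ?g ` S) ` (Nset n w - {?a})" by blast
    qed
  next
    show "(\<lambda>S. ?g ` S) ` (Nset n w - {?a}) \<subseteq> Nset n (w \<circ> ?g) - {?a}"
    proof
      fix S assume "S \<in> (\<lambda>S. ?g ` S) ` (Nset n w - {?a})"
      then obtain T where T: "T \<in> Nset n w" "T \<noteq> ?a" "S = ?g ` T" by blast
      have T1: "T \<in> Rt n" "posr T" "\<not> posr (w ` T)" using T by (auto simp: Nset_def)
      have "?g ` S = T" using T by (auto simp: image_image)
      then show "S \<in> Nset n (w \<circ> ?g) - {?a}"
        using T T1 gen_pos[OF k] gen_ne[OF k] gen_Rt[OF k] by (auto simp: Nset_def image_comp)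
    qed
  qed
  have inj: "inj_on (\<lambda>S. ?g ` S) (Nset n w - {?a})"
    by (rule inj_on_inverseI[where g="\<lambda>S. ?g ` S"]) (auto simp: image_image)
  have c: "card (Nset n (w \<circ> ?g) - {?a}) = card (Nset n w - {?a})"
    using eq card_image[OF inj] by simp
  have wa: "w ` ?a \<in> Rt n" using sp_Rt[OF w aR(1)] .
  have "(w \<circ> ?g) ` ?a = w ` (?g ` ?a)" by (rule image_comp[symmetric])
  also have "\<dots> = uminus ` (w ` ?a)" unfolding gen_alr by (rule img_neg[OF w])
  finally have "(w \<circ> ?g) ` ?a = uminus ` (w ` ?a)" .
  then have m1: "?a \<in> Nset n (w \<circ> ?g) \<longleftrightarrow> posr (w ` ?a)"
    using aR Rt_neg[OF wa] by (simp add: Nset_def)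
  have m2: "?a \<in> Nset n w \<longleftrightarrow> \<not> posr (w ` ?a)"
    using aR by (simp add: Nset_def)
  have f1: "finite (Nset n (w \<circ> ?g))" "finite (Nset n w)" by (rule finite_Nset)+
  show ?thesis
  proof (cases "posr (w ` ?a)")
    case True
    have "card (Nset n (w \<circ> ?g)) = card (Nset n (w \<circ> ?g) - {?a}) + 1"
      using card_Suc_Diff1[OF f1(1)] m1 True by fastforce
    moreover have "card (Nset n w - {?a}) = card (Nset n w)" using m2 True by simp
    ultimately show ?thesis using True c unfolding Lf_def by linarith
  next
    case False
    have "card (Nset n w) = card (Nset n w - {?a}) + 1"
      using card_Suc_Diff1[OF f1(2)] m2 False by fastforce
    moreover have "card (Nset n (w \<circ> ?g) - {?a}) = card (Nset n (w \<circ> ?g))" using m1 False by simp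
    ultimately show ?thesis using False c unfolding Lf_def by linarith
  qed
qed



lemma Lf_id: "Lf n id = 0"
proof -
  have "Nset n id = {}" by (auto simp: Nset_def)
  then show ?thesis by (simp add: Lf_def)
qed

lemma Lf_le: "set ws \<subseteq> {0..<n} \<Longrightarrow> Lf n (evalw ws) \<le> length ws"
proof (induction ws rule: rev_induct)
  case Nil
  show ?case unfolding evalw_Nil Lf_id by simp
next
  case (snoc k ws)
  have w: "sp n (evalw ws)" using snoc.prems by (intro sp_evalw) auto
  have k: "k < n" using snoc.prems by auto
  have e: "evalw (ws @ [k]) = evalw ws \<circ> gen k" by (simp add: evalw_append)
  have IH: "Lf n (evalw ws) \<le> length ws" using snoc by auto
  have st: "Lf n (evalw ws \<circ> gen k) \<le> Lf n (evalw ws) + 1"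
    using N_step[OF w k] by (cases "posr (evalw ws ` alr k)") auto
  have "length (ws @ [k]) = length ws + 1" by simp
  then show ?case unfolding e using IH st by linarith
qed

lemma all_pos_id: assumes w: "sp n w" and P: "\<forall>k<n. posr (w ` alr k)"
  shows "w = id"
proof (cases "n = 0")
  case True
  then show ?thesis using sp_out[OF w] by (auto simp: Dn_def fun_eq_iff)
next
  case False
  have w1: "w 1 > 0" using P False by (auto simp: alr_def)
  have inc: "w (i+1) > w i" if "1 \<le> i" "i < int n" "w i > 0" for i
  proof -
    have "posr (w ` alr (nat i))" using P that by auto
    then have p: "posr {w (i+1), - w i}" using that by (simp add: alr_def sp_odd[OF w])
    have ne: "\<bar>w (i+1)\<bar> \<noteq> \<bar>w i\<bar>" using sp_abs[OF w] by simp
    then have "\<bar>w (i+1)\<bar> \<noteq> \<bar>- w i\<bar>" by simp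
    from p[unfolded posr_pair[OF this]] that ne show ?thesis by (auto split: if_splits)
  qed
  have bnd: "w i \<le> int n" if "1 \<le> i" "i \<le> int n" for i
    using sp_D[OF w, of i] that by (auto simp: Dn_def)
  have up: "w (1 + int j) \<ge> 1 + int j" if "j < n" for j
    using that
  proof (induction j)
    case 0 then show ?case using w1 by simp
  next
    case (Suc j)
    then have "w (1 + int j) \<ge> 1 + int j" by simp
    moreover have "w (1 + int j + 1) > w (1 + int j)" using inc[of "1 + int j"] Suc.prems calculation by simp
    ultimately show ?case by simp
  qed
  have down: "w (int n - int j) \<le> int n - int j" if "j < n" for j
    using that
  proof (induction j)
    case 0 then show ?case using bnd[of "int n"] False by simp
  next
    case (Suc j)
    then have a: "w (int n - int j) \<le> int n - int j" by simp
    have "w (int n - int (Suc j)) \<ge> int n - int (Suc j)" using up[of "n - Suc j - 1"] Suc.prems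
      by (simp add: of_nat_diff algebra_simps)
    then have "w (int n - int (Suc j) + 1) > w (int n - int (Suc j))"
      using inc[of "int n - int (Suc j)"] Suc.prems by simp
    then show ?case using a by simp
  qed
  have pos: "w x = x" if "1 \<le> x" "x \<le> int n" for x
  proof -
    have "w x \<ge> x" using up[of "nat (x - 1)"] that by simp
    moreover have "w x \<le> x" using down[of "nat (int n - x)"] that by simp
    ultimately show ?thesis by simp
  qed
  show ?thesis
  proof
    fix x
    show "w x = id x"
    proof (cases "x \<in> Dn n")
      case True
      then consider "1 \<le> x \<and> x \<le> int n" | "1 \<le> -x \<and> -x \<le> int n" by (auto simp: Dn_def abs_if split: if_splits)
      then show ?thesis
      proof cases
        case 1 then show ?thesis using pos by simp
      next
        case 2 then have "w (-x) = -x" using pos by simp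
        then show ?thesis using sp_odd[OF w, of "-x"] by simp
      qed
    next
      case False then show ?thesis using sp_out[OF w] by simp
    qed
  qed
qed

lemma word_exists: "sp n w \<Longrightarrow> \<exists>us. set us \<subseteq> {0..<n} \<and> length us = Lf n w \<and> evalw us = w"
proof (induction "Lf n w" arbitrary: w)
  case 0
  show ?case
  proof (cases "\<forall>k<n. posr (w ` alr k)")
    case True
    then have "w = id" using all_pos_id 0 by blast
    then show ?thesis using 0 by (intro exI[of _ "[]"]) simp
  next
    case False
    then obtain k where k: "k < n" "\<not> posr (w ` alr k)" by blast
    then show ?thesis using N_step[OF 0(2) k(1)] 0(1) by simp
  qed
next
  case (Suc c)
  show ?case
  proof (cases "\<forall>k<n. posr (w ` alr k)")
    case True
    then have "w = id" using all_pos_id Suc by blast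
    then show ?thesis using Suc(2) Lf_id by simp
  next
    case False
    then obtain k where k: "k < n" "\<not> posr (w ` alr k)" by blast
    have c: "c = Lf n (w \<circ> gen k)" using N_step[OF Suc(3) k(1)] k Suc(2) by simp
    have sw: "sp n (w \<circ> gen k)" using sp_comp[OF Suc(3) sp_gen[OF k(1)]] .
    have ex: "\<exists>us. set us \<subseteq> {0..<n} \<and> length us = c \<and> evalw us = w \<circ> gen k"
      using Suc(1)[OF c sw] c by simp
    then obtain us where us: "set us \<subseteq> {0..<n}" "length us = c" "evalw us = w \<circ> gen k"
      by (elim exE conjE)
    have "evalw (us @ [k]) = w \<circ> (gen k \<circ> gen k)" using us by (simp add: evalw_append comp_assoc)
    also have "gen k \<circ> gen k = id" by (auto simp: fun_eq_iff)
    finally show ?thesis using us k Suc(2) by (intro exI[of _ "us @ [k]"]) simp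
  qed
qed

lemma lenB_eq: assumes "sp n w" shows "lenB n w = Lf n w"
proof -
  let ?P = "\<lambda>k. \<exists>ws. length ws = k \<and> set ws \<subseteq> {0..<n} \<and> evalw ws = w"
  have ex: "?P (Lf n w)" using word_exists[OF assms] by blast
  have "lenB n w \<le> Lf n w" unfolding lenB_def using Least_le[where P = ?P, OF ex] .
  moreover have "?P (lenB n w)" unfolding lenB_def using LeastI[where P = ?P, OF ex] .
  then obtain ws where ws: "length ws = lenB n w" "set ws \<subseteq> {0..<n}" "evalw ws = w"
    by (elim exE conjE)
  have "Lf n w \<le> lenB n w" using Lf_le[OF ws(2)] ws by simp
  ultimately show ?thesis by simp
qed

lemma Lf_inv: assumes a: "sp n a" and b: "sp n b" and ab: "a \<circ> b = id" and ba: "b \<circ> a = id"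
  shows "Lf n a \<le> Lf n b"
proof -
  obtain us where us: "set us \<subseteq> {0..<n}" "length us = Lf n b" "evalw us = b"
    using word_exists[OF b] by blast
  have "evalw (rev us) = evalw (rev us) \<circ> (b \<circ> a)" using ba by simp
  also have "\<dots> = (evalw (rev us) \<circ> evalw us) \<circ> a" using us by (simp add: comp_assoc)
  also have "\<dots> = a" by (simp add: evalw_rev)
  finally have "evalw (rev us) = a" .
  then show ?thesis using Lf_le[of "rev us" n] us by simp
qed

lemma desc: assumes w: "sp n w" and n: "1 \<le> n" and p: "w p = 1"
  shows "Lf n (tB \<circ> w) > Lf n w \<longleftrightarrow> p > 0"
proof -
  obtain us where us: "set us \<subseteq> {0..<n}" "evalw us = w" using word_exists[OF w] by blast
  define v where "v = evalw (rev us)"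
  have v: "sp n v" unfolding v_def using us by (intro sp_evalw) auto
  have vw: "v \<circ> w = id" using us evalw_rev[of us] by (simp add: v_def)
  have wv: "w \<circ> v = id" using us evalw_rev[of "rev us"] by (simp add: v_def)
  have v1: "v 1 = p" using fun_cong[OF vw, of p] p by simp
  have t: "sp n tB" using sp_gen[of 0 n] n by (simp add: gen_def)
  have tt: "tB \<circ> tB = id" by (auto simp: fun_eq_iff tB_def)
  have e1: "Lf n (tB \<circ> w) = Lf n (v \<circ> tB)"
  proof -
    have wvx: "w (v y) = y" for y using fun_cong[OF wv, of y] by simp
    have vwx: "v (w y) = y" for y using fun_cong[OF vw, of y] by simp
    have ttx: "tB (tB y) = y" for y by (simp add: tB_def)
    have x1: "(tB \<circ> w) \<circ> (v \<circ> tB) = id" by (simp add: fun_eq_iff wvx ttx)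
    have x2: "(v \<circ> tB) \<circ> (tB \<circ> w) = id" by (simp add: fun_eq_iff vwx ttx)
    have s1: "sp n (tB \<circ> w)" "sp n (v \<circ> tB)" using sp_comp t w v by auto
    show ?thesis using Lf_inv[OF s1 x1 x2] Lf_inv[OF s1(2) s1(1) x2 x1] by simp
  qed
  have e2: "Lf n v = Lf n w" using Lf_inv[OF v w vw wv] Lf_inv[OF w v wv vw] by simp
  have pp: "posr (v ` alr 0) \<longleftrightarrow> p > 0" using v1 by (simp add: alr_def)
  have g0: "gen 0 = tB" by (simp add: gen_def)
  have n0: "0 < n" using n by simp
  note st = N_step[OF v n0, unfolded g0 pp]
  show ?thesis
  proof (cases "p > 0")
    case True then show ?thesis using st e1 e2 by simp
  next
    case False then show ?thesis using st e1 e2 by simp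
  qed
qed



lemma sB_odd: "k \<noteq> 0 \<Longrightarrow> sB k (-x) = - sB k x" by (auto simp: sB_def)

lemma par_props: assumes "1 \<le> l" "set ws \<subseteq> {l..<n}"
  shows "(\<forall>x. int l \<le> x \<and> x \<le> int n \<longrightarrow> int l \<le> evalw ws x \<and> evalw ws x \<le> int n) \<and>
         (\<forall>x. 1 \<le> x \<and> x < int l \<longrightarrow> evalw ws x = x)"
  using assms(2)
proof (induction ws)
  case Nil then show ?case by simp
next
  case (Cons k ws)
  have k: "l \<le> k" "k < n" using Cons.prems by auto
  then have g: "gen k = sB k" using assms(1) by (simp add: gen_def)
  have IH: "(\<forall>x. int l \<le> x \<and> x \<le> int n \<longrightarrow> int l \<le> evalw ws x \<and> evalw ws x \<le> int n) \<and>
         (\<forall>x. 1 \<le> x \<and> x < int l \<longrightarrow> evalw ws x = x)" using Cons by auto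
  have A: "int l \<le> evalw (k # ws) x \<and> evalw (k # ws) x \<le> int n" if x: "int l \<le> x \<and> x \<le> int n" for x
  proof -
    have "int l \<le> evalw ws x \<and> evalw ws x \<le> int n" using IH x by blast
    then show ?thesis using k by (auto simp: g sB_def)
  qed
  have B: "evalw (k # ws) x = x" if x: "1 \<le> x \<and> x < int l" for x
  proof -
    have "evalw ws x = x" using IH x by blast
    then show ?thesis using k x by (auto simp: g sB_def)
  qed
  show ?case using A B by blast
qed

lemma par_sp: "set ws \<subseteq> {l..<n} \<Longrightarrow> sp n (evalw ws)"
  by (rule sp_evalw) auto

lemma sigma_max: assumes "1 \<le> l" "l < n"
  shows "sigmaB n l n \<in> parB l n \<and> (\<forall>v\<in>parB l n. lenB n v \<le> lenB n (sigmaB n l n))"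
proof -
  let ?V = "lenB n ` parB l n"
  have sub: "?V \<subseteq> {..card (Rt n)}"
  proof
    fix y assume "y \<in> ?V"
    then obtain ws where "set ws \<subseteq> {l..<n}" "y = lenB n (evalw ws)" by (auto simp: parB_def)
    then show "y \<in> {..card (Rt n)}" using lenB_eq[OF par_sp] Lf_bound by auto
  qed
  have fin: "finite ?V" using finite_subset[OF sub] by simp
  have "id \<in> parB l n" unfolding parB_def by (rule CollectI, rule exI[of _ "[]"]) simp
  then have ne: "?V \<noteq> {}" by blast
  obtain w where w: "w \<in> parB l n" "lenB n w = Max ?V" using Max_in[OF fin ne] by auto
  have "\<forall>v\<in>parB l n. lenB n v \<le> lenB n w" using Max_ge[OF fin] w by auto
  then have ex: "\<exists>w. w \<in> parB l n \<and> (\<forall>v\<in>parB l n. lenB n v \<le> lenB n w)" using w by blast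
  show ?thesis unfolding sigmaB_def by (rule someI_ex[OF ex])
qed

lemma sigma_rev: assumes l: "1 \<le> l" "l < n" and x: "int l \<le> x" "x \<le> int n"
  shows "sigmaB n l n x = int n + int l - x"
proof -
  let ?s = "sigmaB n l n"
  have sm: "?s \<in> parB l n" "\<forall>v\<in>parB l n. lenB n v \<le> lenB n ?s" using sigma_max[OF l] by auto
  then obtain ws where ws: "set ws \<subseteq> {l..<n}" "?s = evalw ws" by (auto simp: parB_def)
  have sps: "sp n ?s" using ws par_sp by simp
  have pp: "\<forall>x. int l \<le> x \<and> x \<le> int n \<longrightarrow> int l \<le> ?s x \<and> ?s x \<le> int n"
    using par_props[OF l(1) ws(1)] ws(2) by simp
  have dec: "?s (int i + 1) < ?s (int i)" if i: "l \<le> i" "i < n" for i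
  proof (rule ccontr)
    assume "\<not> ?thesis"
    moreover have "?s (int i + 1) \<noteq> ?s (int i)" using sp_inj[OF sps] by simp
    ultimately have lt: "?s (int i) < ?s (int i + 1)" by simp
    have b: "int l \<le> ?s (int i)" using pp i by simp
    have i1: "i \<noteq> 0" using i l by simp
    have img: "?s ` alr i = {?s (int i + 1), - ?s (int i)}"
      using i1 by (simp add: alr_def sp_odd[OF sps])
    have ne: "\<bar>?s (int i + 1)\<bar> \<noteq> \<bar>- ?s (int i)\<bar>" using lt b l by simp
    have "posr (?s ` alr i)" unfolding img posr_pair[OF ne] using lt b l by auto
    then have L: "Lf n (?s \<circ> gen i) = Lf n ?s + 1" using N_step[OF sps, of i] i by simp
    have "?s \<circ> gen i = evalw (ws @ [i])" using ws by (simp add: evalw_append)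
    moreover have "set (ws @ [i]) \<subseteq> {l..<n}" using ws i by auto
    ultimately have "?s \<circ> gen i \<in> parB l n" unfolding parB_def by blast
    then have "lenB n (?s \<circ> gen i) \<le> lenB n ?s" using sm by blast
    moreover have "sp n (?s \<circ> gen i)" using sp_comp[OF sps sp_gen] i by simp
    ultimately show False using lenB_eq sps L by simp
  qed
  have up: "?s (int l + int j) \<le> int n - int j" if "j \<le> n - l" for j
    using that
  proof (induction j)
    case 0 then show ?case using pp l by simp
  next
    case (Suc j)
    then have a: "?s (int l + int j) \<le> int n - int j" by simp
    have "?s (int (l + j) + 1) < ?s (int (l + j))" using dec[of "l + j"] Suc.prems by simp
    then show ?case using a by (simp add: algebra_simps)
  qed
  have down: "?s (int n - int j) \<ge> int l + int j" if "j \<le> n - l" for j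
    using that
  proof (induction j)
    case 0 then show ?case using pp l by simp
  next
    case (Suc j)
    then have a: "?s (int n - int j) \<ge> int l + int j" by simp
    have "?s (int (n - Suc j) + 1) < ?s (int (n - Suc j))" using dec[of "n - Suc j"] Suc.prems by simp
    moreover have "int (n - Suc j) + 1 = int n - int j" "int (n - Suc j) = int n - int (Suc j)"
      using Suc.prems by auto
    ultimately show ?case using a by simp
  qed
  have h1: "nat (x - int l) \<le> n - l" "nat (int n - x) \<le> n - l" using x l by (simp_all add: nat_le_iff of_nat_diff)
  have "?s x \<le> int n + int l - x" using up[OF h1(1)] x by simp
  moreover have "?s x \<ge> int n + int l - x" using down[OF h1(2)] x by simp
  ultimately show ?thesis by simp
qed

lemma rB_odd: "rB i (-x) = - rB i x"
  by (induction i arbitrary: x rule: rB.induct) (auto simp: tB_def sB_odd)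

lemma aB_odd: "aB l (-x) = - aB l x"
  by (induction l arbitrary: x) (auto simp: rB_odd)

lemma rB_vals: "rB (Suc i) 1 = -(int i + 1) \<and> (\<forall>j. 2 \<le> j \<and> j \<le> int i + 1 \<longrightarrow> rB (Suc i) j = j - 1)
   \<and> (\<forall>x. x > int i + 1 \<longrightarrow> rB (Suc i) x = x)"
proof (induction i)
  case 0 then show ?case by (auto simp: tB_def)
next
  case (Suc i)
  have e: "rB (Suc (Suc i)) = sB (Suc i) \<circ> rB (Suc i)" by simp
  show ?case
  proof (intro conjI allI impI)
    show "rB (Suc (Suc i)) 1 = - (int (Suc i) + 1)" using Suc by (simp add: sB_def)
  next
    fix j :: int assume j: "2 \<le> j \<and> j \<le> int (Suc i) + 1"
    show "rB (Suc (Suc i)) j = j - 1"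
    proof (cases "j \<le> int i + 1")
      case True then have "rB (Suc i) j = j - 1" using Suc j by simp
      then show ?thesis using True j by (simp add: sB_def)
    next
      case False then have "rB (Suc i) j = j" using Suc j by simp
      then show ?thesis using False j by (simp add: sB_def)
    qed
  next
    fix x :: int assume x: "x > int (Suc i) + 1"
    then have "rB (Suc i) x = x" using Suc by simp
    then show "rB (Suc (Suc i)) x = x" using x by (simp add: sB_def)
  qed
qed

lemma aB_vals: "(\<forall>m. 1 \<le> m \<and> m \<le> int l \<longrightarrow> aB l m = -(int l + 1 - m)) \<and> (\<forall>x. x > int l \<longrightarrow> aB l x = x)"
proof (induction l)
  case 0 then show ?case by simp
next
  case (Suc l)
  note R = rB_vals[of l]
  show ?case
  proof (intro conjI allI impI)
    fix m :: int assume m: "1 \<le> m \<and> m \<le> int (Suc l)"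
    show "aB (Suc l) m = - (int (Suc l) + 1 - m)"
    proof (cases "m = 1")
      case True
      have "aB l (int l + 1) = int l + 1" using Suc by simp
      then have "aB l (-(int l + 1)) = -(int l + 1)" using aB_odd[of l "int l + 1"] by simp
      then show ?thesis using True R by simp
    next
      case False
      then have "rB (Suc l) m = m - 1" using R m by simp
      moreover have "aB l (m - 1) = -(int l + 1 - (m - 1))" using Suc m False by simp
      ultimately show ?thesis by simp
    qed
  next
    fix x :: int assume x: "x > int (Suc l)"
    then show "aB (Suc l) x = x" using Suc R by simp
  qed
qed

lemma rB_sp: "i \<le> n \<Longrightarrow> sp n (rB i)"
proof (induction i rule: rB.induct)
  case 1 then show ?case using sp_id[of n, unfolded id_def] by simp
next
  case 2 then show ?case using sp_gen[of 0 n] by (simp add: gen_def)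
next
  case (3 i)
  have "sp n (gen (Suc i))" using 3 by (intro sp_gen) simp
  then have a: "sp n (sB (Suc i))" by (simp add: gen_def)
  have b: "sp n (rB (Suc i))" using 3 by simp
  have "rB (Suc (Suc i)) = sB (Suc i) \<circ> rB (Suc i)" by simp
  then show ?case using sp_comp[OF a b] by metis
qed

lemma aB_sp: "l \<le> n \<Longrightarrow> sp n (aB l)"
proof (induction l)
  case 0 then show ?case using sp_id[of n, unfolded id_def] by simp
next
  case (Suc l)
  have "aB (Suc l) = aB l \<circ> rB (Suc l)" by simp
  moreover have "sp n (aB l \<circ> rB (Suc l))" using sp_comp[OF _ rB_sp, of n "aB l" "Suc l"] Suc by simp
  ultimately show ?case by metis
qed

lemma evalw_run: "sorted_wrt (<) xs \<Longrightarrow> (\<forall>j\<in>set xs. a \<le> j) \<Longrightarrow> 1 \<le> a \<Longrightarrow> a \<le> m \<Longrightarrow>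
   {a..<m} \<subseteq> set xs \<Longrightarrow> m \<notin> set xs \<Longrightarrow> evalw xs (int m) = int a"
proof (induction xs arbitrary: a)
  case Nil
  then have "a = m" by (cases "a < m") auto
  then show ?case by simp
next
  case (Cons x xs)
  have srt: "\<forall>y\<in>set xs. x < y" "sorted_wrt (<) xs" using Cons.prems(1) by auto
  show ?case
  proof (cases "x < m")
    case True
    have ax: "a \<le> x" using Cons.prems(2) by simp
    then have "a \<in> {a..<m}" using True by simp
    then have "a \<in> set (x # xs)" using Cons.prems(5) by blast
    then have xa: "x = a" using ax srt by auto
    have h5: "{a+1..<m} \<subseteq> set xs"
    proof
      fix y assume y: "y \<in> {a+1..<m}"
      then have "y \<in> {a..<m}" by simp
      then have "y \<in> set (x # xs)" using Cons.prems(5) by blast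
      then show "y \<in> set xs" using y xa by auto
    qed
    have h2: "\<forall>j\<in>set xs. a + 1 \<le> j" using srt xa by auto
    have h6: "m \<notin> set xs" using Cons.prems(6) by simp
    have "evalw xs (int m) = int (a + 1)"
      using Cons.IH[OF srt(2) h2 _ _ h5 h6] xa True by simp
    then show ?thesis using xa Cons.prems(3) by (simp add: gen_def sB_def)
  next
    case False
    then have xm: "x > m" using Cons.prems(6) by auto
    have am: "a = m"
    proof (rule ccontr)
      assume "a \<noteq> m"
      then have "a \<in> {a..<m}" using Cons.prems(4) by simp
      then have "a \<in> set (x # xs)" using Cons.prems(5) by blast
      then show False using xm srt Cons.prems(4) \<open>a \<noteq> m\<close> by auto
    qed
    have "evalw xs (int m) = int m"
      using Cons.IH[OF srt(2), of m] srt xm Cons.prems am by auto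
    then show ?thesis using xm am Cons.prems(3) by (simp add: gen_def sB_def)
  qed
qed

lemma cB_run: "finite J \<Longrightarrow> (\<forall>j\<in>J. a \<le> j) \<Longrightarrow> 1 \<le> a \<Longrightarrow> a \<le> m \<Longrightarrow>
   {a..<m} \<subseteq> J \<Longrightarrow> m \<notin> J \<Longrightarrow> cB J (int m) = int a"
  unfolding cB_def
  by (rule evalw_run) (auto simp: strict_sorted_list_of_set)

lemma cB_sp: "finite J \<Longrightarrow> J \<subseteq> {0..<n} \<Longrightarrow> sp n (cB J)"
  unfolding cB_def by (rule sp_evalw) simp



theorem lemma3p2:
  fixes n l :: nat and I :: "nat set"
  assumes "1 \<le> l" and "l \<le> n - 1" and "I \<subseteq> {1..n-1}"
  shows "lenB n (tB \<circ> alphaB n l I) > lenB n (alphaB n l I) \<longleftrightarrow> {1..l-1} \<subset> I"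
proof -
  have l1: "1 \<le> l" and ln: "l < n" and n1: "1 \<le> n" using assms by auto
  define J1 where "J1 = I \<inter> {1..l-1}"
  define J2 where "J2 = {l..n-1} - (I \<inter> {l..n-1})"
  define s where "s = sigmaB n l n"
  have al: "alphaB n l I = cB J1 \<circ> cB J2 \<circ> s \<circ> aB l"
    by (simp add: alphaB_def J1_def J2_def s_def)
  have fJ1: "finite J1" and fJ2: "finite J2" by (auto simp: J1_def J2_def)
  have "J1 \<subseteq> {0..<n}" using ln by (auto simp: J1_def)
  then have sp1: "sp n (cB J1)" using cB_sp[OF fJ1] by blast
  have "J2 \<subseteq> {0..<n}" using ln by (auto simp: J2_def)
  then have sp2: "sp n (cB J2)" using cB_sp[OF fJ2] by blast
  have sm: "s \<in> parB l n" using sigma_max[OF l1 ln] by (simp add: s_def)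
  then obtain ws where ws: "set ws \<subseteq> {l..<n}" "s = evalw ws" by (auto simp: parB_def)
  have sps: "sp n s" using ws par_sp by simp
  have fixs: "\<And>x. 1 \<le> x \<Longrightarrow> x < int l \<Longrightarrow> s x = x" using par_props[OF l1 ws(1)] ws(2) by simp
  have revs: "\<And>x. int l \<le> x \<Longrightarrow> x \<le> int n \<Longrightarrow> s x = int n + int l - x"
    using sigma_rev[OF l1 ln] by (simp add: s_def)
  have spa: "sp n (aB l)" using aB_sp ln by simp
  define w where "w = cB J1 \<circ> cB J2 \<circ> s \<circ> aB l"
  have spw: "sp n w" unfolding w_def using sp1 sp2 sps spa sp_comp by metis
  have spt: "sp n (tB \<circ> w)" using sp_comp[OF sp_gen[of 0 n] spw] n1 by (simp add: gen_def)
  note AV = aB_vals[of l]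
  have key: "\<exists>p. w p = 1 \<and> (p > 0 \<longleftrightarrow> {1..l-1} \<subset> I)"
  proof (cases "{1..l-1} \<subseteq> I")
    case False
    define m where "m = (LEAST m. m \<in> {1..l-1} \<and> m \<notin> I)"
    have exm: "\<exists>m. m \<in> {1..l-1} \<and> m \<notin> I" using False by auto
    have m: "m \<in> {1..l-1}" "m \<notin> I" using LeastI_ex[OF exm] by (auto simp: m_def)
    have below: "j \<in> I" if "1 \<le> j" "j < m" for j
      using not_less_Least[of j "\<lambda>m. m \<in> {1..l-1} \<and> m \<notin> I"] that m by (auto simp: m_def)
    have c1: "cB J1 (int m) = int 1"
      by (rule cB_run[OF fJ1]) (use m below in \<open>auto simp: J1_def\<close>)
    have c2: "cB J2 (int m) = int m"
      by (rule cB_run[OF fJ2]) (use m in \<open>auto simp: J2_def\<close>)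
    have s1: "s (int m) = int m" using fixs m by auto
    define p where "p = - (int l + 1 - int m)"
    have "aB l (int l + 1 - int m) = - int m" using AV m by auto
    then have a1: "aB l p = int m" using aB_odd[of l "int l + 1 - int m"] by (simp add: p_def)
    have "w p = 1" using a1 s1 c2 c1 by (simp add: w_def)
    moreover have "\<not> p > 0" using m by (auto simp: p_def)
    ultimately show ?thesis using False by blast
  next
    case True
    have J1e: "J1 = {1..l-1}" using True by (auto simp: J1_def)
    have c1: "cB J1 (int l) = int 1"
      by (rule cB_run[OF fJ1]) (use l1 in \<open>auto simp: J1e\<close>)
    define q where "q = (LEAST q. q \<in> {l..n} \<and> q \<notin> J2)"
    have exq: "\<exists>q. q \<in> {l..n} \<and> q \<notin> J2" using ln by (intro exI[of _ n]) (auto simp: J2_def)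
    have q: "q \<in> {l..n}" "q \<notin> J2" using LeastI_ex[OF exq] by (auto simp: q_def)
    have belowq: "j \<in> J2" if "l \<le> j" "j < q" for j
      using not_less_Least[of j "\<lambda>q. q \<in> {l..n} \<and> q \<notin> J2"] that q by (auto simp: q_def)
    have h1: "\<forall>j\<in>J2. l \<le> j" by (auto simp: J2_def)
    have h4: "{l..<q} \<subseteq> J2" using belowq by auto
    have c2: "cB J2 (int q) = int l"
      using cB_run[OF fJ2 h1 l1 _ h4 q(2)] q by simp
    show ?thesis
    proof (cases "q < n")
      case qn: True
      define p where "p = int n + int l - int q"
      have sp': "s p = int q" using revs[of p] q by (simp add: p_def)
      have a1: "aB l p = p" using AV qn by (simp add: p_def)
      have "w p = 1" using a1 sp' c2 c1 by (simp add: w_def)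
      moreover have "p > 0" using qn by (simp add: p_def)
      moreover have "q \<in> I" using q qn by (auto simp: J2_def)
      then have "{1..l-1} \<subset> I" using True q by auto
      ultimately show ?thesis by blast
    next
      case qn: False
      then have qn': "q = n" using q by simp
      define p where "p = (-1 :: int)"
      have "aB l 1 = - int l" using AV l1 by simp
      then have a1: "aB l p = int l" using aB_odd[of l 1] by (simp add: p_def)
      have sp': "s (int l) = int q" using revs[of "int l"] ln qn' by simp
      have "w p = 1" using a1 sp' c2 c1 by (simp add: w_def)
      moreover have "\<not> {1..l-1} \<subset> I"
      proof
        assume "{1..l-1} \<subset> I"
        then obtain j where j: "j \<in> I" "j \<notin> {1..l-1}" using psubset_imp_ex_mem by blast
        then have "l \<le> j" "j < n" using assms(3) by auto
        then have "j \<in> J2" using belowq qn' by simp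
        then show False using j by (auto simp: J2_def)
      qed
      ultimately show ?thesis by (auto simp: p_def)
    qed
  qed
  then obtain p where p: "w p = 1" "p > 0 \<longleftrightarrow> {1..l-1} \<subset> I" by blast
  have "lenB n (tB \<circ> w) > lenB n w \<longleftrightarrow> p > 0"
    using desc[OF spw n1 p(1)] lenB_eq[OF spw] lenB_eq[OF spt] by simp
  then show ?thesis using p(2) al w_def by simp
qed


end
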